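(* Let $\beta>2\alpha>0$ with $\beta+2\alpha>1$, and let $\varphi_N(x)=\frac12x^TAx-\sum_{k=1}^{s_N}\log\cosh(x^TAe_k)$ for $x\in\mathbb{R}^{s_N}$. Then $\varphi_N$ attains its minimum at $x=\overrightarrow{m}^*$ and at $x=-\overrightarrow{m}^*$, where $\overrightarrow{m}^*=(m^*,\dots,m^* )\in\mathbb{R}^{s_N}$ and $m^*=m^*(\beta+2\alpha)$ is the largest solution of $x=\tanh((\beta+2\alpha)x)$.
   Context: $A$ is the $s_N\times s_N$ symmetric circulant matrix $A=\beta I+\alpha(P+P^T)$, where $P$ is the cyclic shift matrix (so $A_{kk}=\beta$, $A_{k,k\pm1}=\alpha$ with indices mod $s_N$); $e_k$ are the standard basis vectors of $\mathbb{R}^{s_N}$. *)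

theory Defs
  imports Complex_Main
begin

text \<open>Vectors in R^n are functions nat \<Rightarrow> real, only indices below n matter.
  The circulant matrix A = beta I + alpha (P + P^T), P the cyclic shift (indices mod n).\<close>

definition shiftP :: "nat \<Rightarrow> nat \<Rightarrow> nat \<Rightarrow> real" where
  "shiftP n i j = (if j = Suc i mod n then 1 else 0)"

definition circA :: "nat \<Rightarrow> real \<Rightarrow> real \<Rightarrow> nat \<Rightarrow> nat \<Rightarrow> real" where
  "circA n \<alpha> \<beta> i j = \<beta> * (if i = j then 1 else 0) + \<alpha> * (shiftP n i j + shiftP n j i)"

definition phiN :: "nat \<Rightarrow> real \<Rightarrow> real \<Rightarrow> (nat \<Rightarrow> real) \<Rightarrow> real" where
  "phiN n \<alpha> \<beta> x =
     (1/2) * (\<Sum>i<n. \<Sum>j<n. x i * circA n \<alpha> \<beta> i j * x j)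
     - (\<Sum>k<n. ln (cosh (\<Sum>i<n. x i * circA n \<alpha> \<beta> i k)))"

end

theory Submission
  imports Defs "HOL-Analysis.Analysis"
begin


lemma cosh_ne0: "cosh (x::real) \<noteq> 0"
  by (metis cosh_real_pos less_irrefl)

lemma deriv_lncosh: "((\<lambda>u. ln (cosh u)) has_real_derivative tanh (x::real)) (at x)"
proof -
  have "((\<lambda>u. ln (cosh u)) has_real_derivative (1 / cosh x * sinh x)) (at x)"
    by (rule derivative_eq_intros refl | simp add: cosh_real_pos)+
  then show ?thesis by (simp add: tanh_def divide_simps)
qed

lemma lncosh_convex: "convex_on UNIV (\<lambda>u::real. ln (cosh u))"
proof (rule f''_ge0_imp_convex[where f'=tanh and f''="\<lambda>x. 1 - tanh x ^ 2"])
  fix x :: real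
  show "DERIV tanh x :> 1 - tanh x ^ 2"
    by (rule derivative_eq_intros refl | simp add: cosh_ne0)+
  have "\<bar>tanh x\<bar> < 1" using tanh_real_bounds[of x] by auto
  then have "tanh x ^ 2 \<le> 1" by (simp add: abs_square_le_1)
  then show "0 \<le> 1 - tanh x ^ 2" by simp
qed (auto simp: deriv_lncosh)

lemma lncosh_tangent: "ln (cosh (u::real)) \<ge> ln (cosh y) + tanh y * (u - y)"
  using convex_on_imp_above_tangent[OF lncosh_convex, of y u "tanh y"] deriv_lncosh[of y]
  by (auto simp: has_field_derivative_at_within)

lemma fix_conv:
  fixes c :: real assumes "c > 0"
  shows "convex_on {0..} (\<lambda>t. t - tanh (c*t))"
proof (rule f''_ge0_imp_convex[where f'="\<lambda>t. 1 - c * (1 - tanh (c*t) ^ 2)"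
      and f''="\<lambda>t. 2 * c * c * tanh (c*t) * (1 - tanh (c*t) ^ 2)"])
  fix x :: real
  show "DERIV (\<lambda>t. t - tanh (c*t)) x :> 1 - c * (1 - tanh (c*x) ^ 2)"
    by (rule derivative_eq_intros refl | simp add: cosh_ne0)+
  show "DERIV (\<lambda>t. 1 - c * (1 - tanh (c*t) ^ 2)) x :> 2 * c * c * tanh (c*x) * (1 - tanh (c*x) ^ 2)"
    by (rule derivative_eq_intros refl | simp add: cosh_ne0)+
  assume "x \<in> {0..}"
  then have "tanh (c*x) \<ge> 0" using assms by simp
  moreover have "\<bar>tanh (c*x)\<bar> < 1" using tanh_real_bounds[of "c*x"] by auto
  then have "tanh (c*x) ^ 2 \<le> 1" by (simp add: abs_square_le_1)
  ultimately show "0 \<le> 2 * c * c * tanh (c*x) * (1 - tanh (c*x) ^ 2)"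
    using assms by simp
qed (auto simp: convex_real_interval)

lemma H_deriv: fixes c x :: real shows "DERIV (\<lambda>s. c/2 * s^2 - ln (cosh (c * s))) x :> c * (x - tanh (c*x))"
proof -
  have "DERIV (\<lambda>s. c/2 * s^2 - ln (cosh (c * s))) x :> c/2 * (2 * x) - 1 / cosh (c*x) * (sinh (c*x) * c)"
    by (rule derivative_eq_intros refl | simp add: cosh_real_pos)+
  then show ?thesis by (simp add: tanh_def field_simps)
qed

lemma H_min:
  fixes c m s :: real
  assumes c: "c > 0" and fx: "m = tanh (c*m)" and lg: "\<forall>y::real. y = tanh (c*y) \<longrightarrow> y \<le> m"
  shows "c/2 * s^2 - ln (cosh (c * s)) \<ge> c/2 * m^2 - ln (cosh (c*m))"
proof -
  define H where "H = (\<lambda>s. c/2 * s^2 - ln (cosh (c * s)))"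
  have m0: "m \<ge> 0" using lg by auto
  have low: "t - tanh (c*t) \<le> 0" if "0 \<le> t" "t \<le> m" for t
  proof (cases "m = 0")
    case True then show ?thesis using that by simp
  next
    case False
    then have mp: "m > 0" using m0 by simp
    define l where "l = t / m"
    have l: "0 \<le> l" "l \<le> 1" using that mp by (auto simp: l_def)
    have tl: "t = (1 - l) *\<^sub>R 0 + l *\<^sub>R m" using mp by (simp add: l_def)
    have "(\<lambda>t. t - tanh (c*t)) ((1 - l) *\<^sub>R 0 + l *\<^sub>R m) \<le> (1 - l) * (0 - tanh (c*0)) + l * (m - tanh (c*m))"
      by (rule convex_onD[OF fix_conv[OF c]]) (use l m0 in auto)
    then show ?thesis using fx tl by simp
  qed
  have high: "t - tanh (c*t) \<ge> 0" if "m \<le> t" for t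
  proof (rule ccontr)
    assume neg: "\<not> ?thesis"
    have "(t+1) - tanh (c*(t+1)) \<ge> 0" using tanh_real_lt_1[of "c*(t+1)"] that m0 by simp
    moreover have "\<forall>x. t \<le> x \<and> x \<le> t + 1 \<longrightarrow> isCont (\<lambda>t. t - tanh (c * t)) x"
      by (auto intro!: continuous_intros simp: cosh_ne0)
    ultimately obtain x where x: "t \<le> x" "x \<le> t+1" "x - tanh (c*x) = 0"
      using IVT[of "\<lambda>t. t - tanh (c*t)" t 0 "t+1"] neg by auto
    then have "x \<le> m" using lg by auto
    then have "x = t" using x that by simp
    then show False using x neg by simp
  qed
  have Hd: "DERIV H x :> c * (x - tanh (c*x))" for x unfolding H_def by (rule H_deriv)
  have pos: "H s \<ge> H m" if "s \<ge> 0" for s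
  proof (cases "s \<le> m")
    case True
    show ?thesis
    proof (rule DERIV_nonpos_imp_nonincreasing[OF True])
      fix x assume "s \<le> x" "x \<le> m"
      then have "x - tanh (c*x) \<le> 0" using low that by simp
      then have "c * (x - tanh (c*x)) \<le> 0" using c by (simp add: mult_nonneg_nonpos)
      then show "\<exists>y. DERIV H x :> y \<and> y \<le> 0" using Hd by blast
    qed
  next
    case False
    show ?thesis
    proof (rule DERIV_nonneg_imp_nondecreasing[of m s H])
      show "m \<le> s" using False by simp
      fix x assume "m \<le> x" "x \<le> s"
      then have "x - tanh (c*x) \<ge> 0" using high by simp
      then have "c * (x - tanh (c*x)) \<ge> 0" using c by simp
      then show "\<exists>y. DERIV H x :> y \<and> y \<ge> 0" using Hd by blast
    qed
  qed
  have "H s \<ge> H m"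
  proof (cases "s \<ge> 0")
    case True then show ?thesis using pos by simp
  next
    case False
    have "H s = H (-s)" by (simp add: H_def)
    then show ?thesis using pos[of "-s"] False by simp
  qed
  then show ?thesis by (simp add: H_def)
qed



definition Bf :: "nat \<Rightarrow> real \<Rightarrow> real \<Rightarrow> (nat \<Rightarrow> real) \<Rightarrow> (nat \<Rightarrow> real) \<Rightarrow> real" where
  "Bf n a b u v = (\<Sum>i<n. \<Sum>j<n. u i * circA n a b i j * v j)"

lemma circA_sym: "circA n a b i j = circA n a b j i"
  by (simp add: circA_def add.commute)

lemma rot_sum:
  assumes "n \<ge> 1" shows "(\<Sum>i<n. g (Suc i mod n)) = (\<Sum>i<n. (g i :: real))"
proof -
  obtain k where n: "n = Suc k" using assms by (cases n) auto
  have "(\<Sum>i<Suc k. g (Suc i mod Suc k)) = (\<Sum>i<k. g (Suc i mod Suc k)) + g 0"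
    by (simp add: sum.lessThan_Suc)
  also have "(\<Sum>i<k. g (Suc i mod Suc k)) = (\<Sum>i<k. g (Suc i))"
    by (rule sum.cong) auto
  also have "\<dots> + g 0 = (\<Sum>i<Suc k. g i)"
    by (subst sum.lessThan_Suc_shift) (simp add: add.commute)
  finally show ?thesis using n by simp
qed

lemma shift_row: fixes u :: real shows "i < n \<Longrightarrow> (\<Sum>j<n. u * shiftP n i j * v j) = u * v (Suc i mod n)"
proof -
  assume "i < n"
  then have "n > 0" by simp
  have "(\<Sum>j<n. u * shiftP n i j * v j) = (\<Sum>j<n. if j = Suc i mod n then u * v j else 0)"
    by (rule sum.cong) (auto simp: shiftP_def)
  also have "\<dots> = u * v (Suc i mod n)" using \<open>n > 0\<close> by (simp add: sum.delta')
  finally show ?thesis .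
qed

lemma Bf_formula:
  assumes "n \<ge> 1"
  shows "Bf n a b u v = b * (\<Sum>i<n. u i * v i) + a * (\<Sum>i<n. u i * v (Suc i mod n)) + a * (\<Sum>i<n. v i * u (Suc i mod n))"
proof -
  have "Bf n a b u v = (\<Sum>i<n. \<Sum>j<n. b * (if i = j then u i * v j else 0) + a * (u i * shiftP n i j * v j) + a * (v j * shiftP n j i * u i))"
    unfolding Bf_def circA_def by (intro sum.cong refl) (simp add: algebra_simps)
  also have "\<dots> = (\<Sum>i<n. \<Sum>j<n. b * (if i = j then u i * v j else 0)) + (\<Sum>i<n. \<Sum>j<n. a * (u i * shiftP n i j * v j)) + (\<Sum>i<n. \<Sum>j<n. a * (v j * shiftP n j i * u i))"
    by (simp only: sum.distrib)
  also have "(\<Sum>i<n. \<Sum>j<n. b * (if i = j then u i * v j else 0)) = (\<Sum>i<n. b * (u i * v i))"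
    by (rule sum.cong) (auto simp: if_distrib sum.delta cong: if_cong)
  also have "\<dots> + (\<Sum>i<n. \<Sum>j<n. a * (u i * shiftP n i j * v j)) + (\<Sum>i<n. \<Sum>j<n. a * (v j * shiftP n j i * u i))
     = b * (\<Sum>i<n. u i * v i) + a * (\<Sum>i<n. \<Sum>j<n. u i * shiftP n i j * v j) + a * (\<Sum>i<n. \<Sum>j<n. v j * shiftP n j i * u i)"
    by (simp only: sum_distrib_left)
  also have "(\<Sum>i<n. \<Sum>j<n. u i * shiftP n i j * v j) = (\<Sum>i<n. u i * v (Suc i mod n))"
    by (rule sum.cong) (auto simp: shift_row)
  also have "(\<Sum>i<n. \<Sum>j<n. v j * shiftP n j i * u i) = (\<Sum>j<n. \<Sum>i<n. v j * shiftP n j i * u i)"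
    by (rule sum.swap)
  also have "\<dots> = (\<Sum>i<n. v i * u (Suc i mod n))"
    by (rule sum.cong) (auto simp: shift_row)
  finally show ?thesis .
qed

lemma cyc_bound:
  fixes w :: "nat \<Rightarrow> real"
  assumes "n \<ge> 1"
  shows "\<bar>\<Sum>i<n. w i * w (Suc i mod n)\<bar> \<le> (\<Sum>i<n. (w i)^2)"
proof -
  have "\<bar>\<Sum>i<n. w i * w (Suc i mod n)\<bar> \<le> (\<Sum>i<n. \<bar>w i * w (Suc i mod n)\<bar>)"
    by simp
  also have "\<dots> \<le> (\<Sum>i<n. ((w i)^2 + (w (Suc i mod n))^2) / 2)"
  proof (rule sum_mono)
    fix i
    have "2 * \<bar>w i\<bar> * \<bar>w (Suc i mod n)\<bar> \<le> \<bar>w i\<bar>^2 + \<bar>w (Suc i mod n)\<bar>^2"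
      using sum_squares_bound[of "\<bar>w i\<bar>" "\<bar>w (Suc i mod n)\<bar>"] by (simp add: power2_eq_square)
    then show "\<bar>w i * w (Suc i mod n)\<bar> \<le> ((w i)^2 + (w (Suc i mod n))^2) / 2"
      by (simp add: abs_mult)
  qed
  also have "\<dots> = ((\<Sum>i<n. (w i)^2) + (\<Sum>i<n. (w (Suc i mod n))^2)) / 2"
    by (simp add: sum.distrib sum_divide_distrib[symmetric])
  also have "(\<Sum>i<n. (w (Suc i mod n))^2) = (\<Sum>i<n. (w i)^2)"
    by (rule rot_sum[OF assms])
  finally show ?thesis by simp
qed

lemma Q_formula:
  assumes "n \<ge> 1"
  shows "Bf n a b w w = b * (\<Sum>i<n. (w i)^2) + 2 * a * (\<Sum>i<n. w i * w (Suc i mod n))"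
  using Bf_formula[OF assms, of a b w w] by (simp add: power2_eq_square)

lemma Q_bounds:
  assumes "n \<ge> 1" "a > 0"
  shows "Bf n a b w w \<ge> (b - 2*a) * (\<Sum>i<n. (w i)^2)"
    and "Bf n a b w w \<le> (b + 2*a) * (\<Sum>i<n. (w i)^2)"
proof -
  define S where "S = (\<Sum>i<n. (w i)^2)"
  define C where "C = (\<Sum>i<n. w i * w (Suc i mod n))"
  have c: "\<bar>C\<bar> \<le> S" unfolding S_def C_def by (rule cyc_bound[OF assms(1)])
  then have c1: "-S \<le> C" and c2: "C \<le> S" by (auto simp: abs_le_iff)
  have a2: "2 * a \<ge> 0" using assms(2) by simp
  have Q: "Bf n a b w w = b * S + 2 * a * C" unfolding S_def C_def by (rule Q_formula[OF assms(1)])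
  have "2 * a * (-S) \<le> 2 * a * C" by (rule mult_left_mono[OF c1 a2])
  then show "Bf n a b w w \<ge> (b - 2*a) * (\<Sum>i<n. (w i)^2)"
    using Q unfolding S_def[symmetric] by (simp add: algebra_simps)
  have "2 * a * C \<le> 2 * a * S" by (rule mult_left_mono[OF c2 a2])
  then show "Bf n a b w w \<le> (b + 2*a) * (\<Sum>i<n. (w i)^2)"
    using Q unfolding S_def[symmetric] by (simp add: algebra_simps)
qed

lemma Bf_sym: "Bf n a b u v = Bf n a b v u"
proof -
  have "Bf n a b u v = (\<Sum>j<n. \<Sum>i<n. u i * circA n a b i j * v j)"
    unfolding Bf_def by (rule sum.swap)
  also have "\<dots> = Bf n a b v u"
    unfolding Bf_def by (intro sum.cong refl) (simp add: circA_def)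
  finally show ?thesis .
qed

lemma Bf_diff: "Bf n a b (\<lambda>i. u i - v i) (\<lambda>i. u i - v i) = Bf n a b u u - 2 * Bf n a b u v + Bf n a b v v"
proof -
  have "Bf n a b (\<lambda>i. u i - v i) (\<lambda>i. u i - v i) = Bf n a b u u - Bf n a b u v - Bf n a b v u + Bf n a b v v"
  proof -
    have "Bf n a b (\<lambda>i. u i - v i) (\<lambda>i. u i - v i) = (\<Sum>i<n. \<Sum>j<n. u i * circA n a b i j * u j - u i * circA n a b i j * v j - v i * circA n a b i j * u j + v i * circA n a b i j * v j)"
      unfolding Bf_def by (intro sum.cong refl) (simp add: algebra_simps)
    also have "\<dots> = Bf n a b u u - Bf n a b u v - Bf n a b v u + Bf n a b v v"
      by (simp only: Bf_def sum.distrib sum_subtractf)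
    finally show ?thesis .
  qed
  then show ?thesis using Bf_sym[of n a b v u] by simp
qed

lemma col_sum:
  assumes "n \<ge> 1" "k < n"
  shows "(\<Sum>i<n. circA n a b i k) = b + 2 * a"
proof -
  have "(\<Sum>i<n. circA n a b i k) = Bf n a b (\<lambda>_. 1) (\<lambda>j. if j = k then 1 else 0)"
    unfolding Bf_def using assms(2) by (intro sum.cong refl) (simp add: if_distrib sum.delta cong: if_cong)
  also have "\<dots> = b + a * (\<Sum>i<n. (if Suc i mod n = k then 1 else 0)) + a * 1"
    using assms by (simp add: Bf_formula sum.delta)
  also have "(\<Sum>i<n. (if Suc i mod n = k then 1 else 0)) = (\<Sum>i<n. (if i = k then 1 else 0::real))"
    by (rule rot_sum[OF assms(1), of "\<lambda>i. if i = k then 1 else 0"])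
  also have "\<dots> = 1" using assms by simp
  finally show ?thesis by simp
qed



lemma phi_const:
  assumes "n \<ge> 1"
  shows "phiN n a b (\<lambda>_. t) = real n * ((b + 2*a)/2 * t^2 - ln (cosh ((b + 2*a) * t)))"
proof -
  have y: "(\<Sum>i<n. t * circA n a b i k) = (b + 2*a) * t" if "k < n" for k
    using col_sum[OF assms that, of a b] by (simp add: sum_distrib_left[symmetric])
  have Q: "Bf n a b (\<lambda>_. t) (\<lambda>_. t) = real n * (b + 2*a) * t^2"
    using Q_formula[OF assms, of a b "\<lambda>_. t"] by (simp add: power2_eq_square algebra_simps)
  have "phiN n a b (\<lambda>_. t) = 1/2 * Bf n a b (\<lambda>_. t) (\<lambda>_. t) - (\<Sum>k<n. ln (cosh ((b + 2*a) * t)))"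
    unfolding phiN_def Bf_def using y by simp
  also have "\<dots> = real n * ((b + 2*a)/2 * t^2 - ln (cosh ((b + 2*a) * t)))"
    using Q by (simp add: algebra_simps)
  finally show ?thesis .
qed

lemma phi_lower:
  assumes n: "n \<ge> 1" and ab: "b > 2 * a" "2 * a > 0"
    and fx: "m = tanh ((b + 2*a) * m)" and lg: "\<forall>y::real. y = tanh ((b + 2*a) * y) \<longrightarrow> y \<le> m"
  shows "phiN n a b x \<ge> real n * ((b + 2*a)/2 * m^2 - ln (cosh ((b + 2*a) * m)))"
proof -
  define c where "c = b + 2*a"
  have c0: "c > 0" using ab by (simp add: c_def)
  define y where "y = (\<lambda>k. \<Sum>i<n. x i * circA n a b i k)"
  define z where "z = (\<lambda>k. tanh (y k))"
  have a0: "a > 0" using ab by simp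
  have B: "Bf n a b x z = (\<Sum>k<n. y k * z k)"
  proof -
    have "Bf n a b x z = (\<Sum>j<n. \<Sum>i<n. x i * circA n a b i j * z j)"
      unfolding Bf_def by (rule sum.swap)
    also have "\<dots> = (\<Sum>k<n. y k * z k)"
      unfolding y_def by (simp add: sum_distrib_right)
    finally show ?thesis .
  qed
  have "Bf n a b (\<lambda>i. x i - z i) (\<lambda>i. x i - z i) \<ge> (b - 2*a) * (\<Sum>i<n. (x i - z i)^2)"
    by (rule Q_bounds(1)[OF n a0])
  moreover have "(b - 2*a) * (\<Sum>i<n. (x i - z i)^2) \<ge> 0"
    using ab by (intro mult_nonneg_nonneg sum_nonneg) auto
  ultimately have "Bf n a b x x - 2 * Bf n a b x z + Bf n a b z z \<ge> 0"
    using Bf_diff[of n a b x z] by simp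
  moreover have "Bf n a b z z \<le> c * (\<Sum>i<n. (z i)^2)"
    unfolding c_def by (rule Q_bounds(2)[OF n a0])
  ultimately have Qx: "Bf n a b x x \<ge> 2 * (\<Sum>k<n. y k * z k) - c * (\<Sum>k<n. (z k)^2)"
    using B by simp
  have "phiN n a b x = 1/2 * Bf n a b x x - (\<Sum>k<n. ln (cosh (y k)))"
    unfolding phiN_def Bf_def y_def by simp
  also have "\<dots> \<ge> (\<Sum>k<n. y k * z k - c/2 * (z k)^2 - ln (cosh (y k)))"
  proof -
    have e: "(\<Sum>k<n. y k * z k - c/2 * (z k)^2 - ln (cosh (y k))) = (\<Sum>k<n. y k * z k) - c/2 * (\<Sum>k<n. (z k)^2) - (\<Sum>k<n. ln (cosh (y k)))"
      by (simp add: sum_subtractf sum_distrib_left)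
    show ?thesis unfolding e using Qx by simp
  qed
  moreover have "(\<Sum>k<n. y k * z k - c/2 * (z k)^2 - ln (cosh (y k))) \<ge> (\<Sum>k<n. c/2 * m^2 - ln (cosh (c * m)))"
  proof (rule sum_mono)
    fix k
    have t: "ln (cosh (c * z k)) \<ge> ln (cosh (y k)) + z k * (c * z k - y k)"
      unfolding z_def by (rule lncosh_tangent)
    have h: "c/2 * (z k)^2 - ln (cosh (c * z k)) \<ge> c/2 * m^2 - ln (cosh (c * m))"
      by (rule H_min[OF c0]) (use fx lg in \<open>auto simp: c_def\<close>)
    show "y k * z k - c/2 * (z k)^2 - ln (cosh (y k)) \<ge> c/2 * m^2 - ln (cosh (c * m))"
      using t h by (simp add: power2_eq_square algebra_simps)
  qed
  ultimately show ?thesis by (simp add: c_def)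
qed

theorem lemma4p5:
  fixes n :: nat and \<alpha> \<beta> m :: real
  assumes "n \<ge> 1"
    and "\<beta> > 2 * \<alpha>" and "2 * \<alpha> > 0" and "\<beta> + 2 * \<alpha> > 1"
    and "m = tanh ((\<beta> + 2 * \<alpha>) * m)"
    and "\<forall>y::real. y = tanh ((\<beta> + 2 * \<alpha>) * y) \<longrightarrow> y \<le> m"
  shows "(\<forall>x. phiN n \<alpha> \<beta> (\<lambda>_. m) \<le> phiN n \<alpha> \<beta> x) \<and>
         (\<forall>x. phiN n \<alpha> \<beta> (\<lambda>_. - m) \<le> phiN n \<alpha> \<beta> x)"
  using phi_lower[OF assms(1,2,3,5,6)] phi_const[OF assms(1), of \<alpha> \<beta> m] phi_const[OF assms(1), of \<alpha> \<beta> "-m"]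
  by simp

end
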